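(* Fix $d\in\mathbb N$ and $k\le d$, and let $S_\star\subseteq[d]$ with $|S_\star|=k$ be unknown. Suppose samples $\{(x^{(i)},\tilde z^{(i)})\}_{i=1}^m$ are generated under propagating noise with level $\eta\in[0,1/2)$, where the orderings $\pi^{(1)},\dots,\pi^{(m)}$ may be chosen adversarially based on $(x^{(1)},\dots,x^{(m)})$. Then there is a universal constant $C>0$ such that for every $\delta\in(0,1)$, if $m\ge C\cdot\frac{k}{(1-2\eta)^2}\log\frac d\delta$, the output $\hat S$ of the Support Recovery Algorithm satisfies $\Pr[\hat S=S_\star]\ge1-\delta$.
   Context: Data model: $x^{(1)},\dots,x^{(m)}$ are i.i.d. uniform on $\{0,1\}^d$. For each $i$, a bijection $\pi^{(i)}:[k]\to S_\star$ (an ordering of $S_\star$) is chosen (possibly adversarially as a function of all the inputs). With $\xi^{(i)}_1,\dots,\xi^{(i)}_k$ i.i.d. $\mathrm{Bern}(\eta)$, independent of everything else, the observed chain is $\tilde z^{(i)}=(\tilde z^{(i)}_1,\dots,\tilde z^{(i)}_k)$ with $\tilde z^{(i)}_0=0$ and $\tilde z^{(i)}_t=\tilde z^{(i)}_{t-1}\oplus x^{(i)}_{\pi^{(i)}(t)}\oplus\xi^{(i)}_t$ for $t=1,\dots,k$ (equivalently $\tilde z^{(i)}_t=\bigoplus_{s\le t}x^{(i)}_{\pi^{(i)}(s)}\oplus\bigoplus_{s\le t}\xi^{(i)}_s$). Support Recovery Algorithm: with $\tilde z^{(i)}_0=0$, set $\tilde\delta^{(i)}_t=1-2(\tilde z^{(i)}_t\oplus\tilde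 z^{(i)}_{t-1})$ and $\tilde s^{(i)}=\sum_{t=1}^k\tilde\delta^{(i)}_t$; for each $j\in[d]$ compute $\mathrm{score}(j)=\frac1m\sum_{i=1}^m(1-2x^{(i)}_j)\tilde s^{(i)}$; output $\hat S$ as the $k$ indices with largest score. *)

theory Defs
  imports "HOL-Probability.Probability"
begin

text \<open>Conventions: coordinates are indexed by [d] = {1..d}, samples by {1..m},
  chain positions by [k] = {1..k}. Bits are booleans (True = 1), XOR is inequality.
  A sample matrix is X :: nat \<Rightarrow> nat \<Rightarrow> bool, X i j = x^(i)_j;
  the noise matrix is N :: nat \<Rightarrow> nat \<Rightarrow> bool, N i t = xi^(i)_t.\<close>

definition input_pmf :: "nat \<Rightarrow> nat \<Rightarrow> (nat \<Rightarrow> nat \<Rightarrow> bool) pmf" where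
  "input_pmf m d =
     map_pmf (\<lambda>f i j. f (i, j)) (Pi_pmf ({1..m} \<times> {1..d}) False (\<lambda>_. pmf_of_set UNIV))"

definition noise_pmf :: "nat \<Rightarrow> nat \<Rightarrow> real \<Rightarrow> (nat \<Rightarrow> nat \<Rightarrow> bool) pmf" where
  "noise_pmf m k \<eta> =
     map_pmf (\<lambda>f i t. f (i, t)) (Pi_pmf ({1..m} \<times> {1..k}) False (\<lambda>_. bernoulli_pmf \<eta>))"

fun chain :: "(nat \<Rightarrow> bool) \<Rightarrow> (nat \<Rightarrow> nat) \<Rightarrow> (nat \<Rightarrow> bool) \<Rightarrow> nat \<Rightarrow> bool" where
  "chain x p \<xi> 0 = False"
| "chain x p \<xi> (Suc t) = ((chain x p \<xi> t \<noteq> x (p (Suc t))) \<noteq> \<xi> (Suc t))"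

definition chain_sum :: "nat \<Rightarrow> (nat \<Rightarrow> bool) \<Rightarrow> real" where
  "chain_sum k z = (\<Sum>t=1..k. 1 - 2 * of_bool (z t \<noteq> z (t - 1)))"

definition score :: "nat \<Rightarrow> nat \<Rightarrow> (nat \<Rightarrow> nat \<Rightarrow> bool) \<Rightarrow> (nat \<Rightarrow> nat \<Rightarrow> bool) \<Rightarrow> nat \<Rightarrow> real" where
  "score m k X Z j = (1 / real m) * (\<Sum>i=1..m. (1 - 2 * of_bool (X i j)) * chain_sum k (Z i))"

text \<open>The possible outputs "k indices with largest score" (all tie-breakings).\<close>
definition top_k_sets :: "nat \<Rightarrow> nat \<Rightarrow> (nat \<Rightarrow> real) \<Rightarrow> nat set set" where
  "top_k_sets d k sc = {T. T \<subseteq> {1..d} \<and> card T = k \<and>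
       (\<forall>j\<in>T. \<forall>l\<in>{1..d} - T. sc l \<le> sc j)}"

text \<open>Success event: every admissible output of the algorithm equals S
  (i.e. recovery succeeds no matter how ties are broken). Here P is the adversary:
  P X i is the ordering used for sample i, chosen as a function of all inputs X.\<close>
definition recovery_success ::
  "nat \<Rightarrow> nat \<Rightarrow> nat \<Rightarrow> nat set \<Rightarrow> ((nat \<Rightarrow> nat \<Rightarrow> bool) \<Rightarrow> nat \<Rightarrow> nat \<Rightarrow> nat)
     \<Rightarrow> (nat \<Rightarrow> nat \<Rightarrow> bool) \<Rightarrow> (nat \<Rightarrow> nat \<Rightarrow> bool) \<Rightarrow> bool" where
  "recovery_success d k m S P X N =
     (\<forall>T \<in> top_k_sets d k (score m k X (\<lambda>i. chain (X i) (P X i) (N i))). T = S)"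

end

theory Submission
  imports Defs
begin


lemma hoeff_Pi:
  fixes D :: "'i \<Rightarrow> 'v pmf" and g :: "'i \<Rightarrow> 'v \<Rightarrow> real"
  assumes fin: "finite I" and JI: "J \<subseteq> I"
    and bnd: "\<And>a v. a \<in> J \<Longrightarrow> \<bar>g a v\<bar> \<le> 1"
    and eps: "\<epsilon> > 0" and K: "real (card J) \<le> K" "K > 0"
  shows "measure_pmf.prob (Pi_pmf I dflt D)
     {f. \<bar>(\<Sum>a\<in>J. g a (f a)) - (\<Sum>a\<in>J. measure_pmf.expectation (D a) (g a))\<bar> \<ge> \<epsilon>}
      \<le> 2 * exp (- \<epsilon>\<^sup>2 / (2 * K))"
proof (cases "J = {}")
  case True
  then show ?thesis using eps by simp
next
  case False
  have finJ: "finite J" using fin JI finite_subset by blast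
  let ?M = "measure_pmf (Pi_pmf I dflt D)"
  let ?mu = "\<Sum>a\<in>J. measure_pmf.expectation (Pi_pmf I dflt D) (\<lambda>f. g a (f a))"
  interpret H: Hoeffding_ineq ?M J "\<lambda>a f. g a (f a)" "\<lambda>_. -1" "\<lambda>_. 1" ?mu
  proof unfold_locales
    show "finite J" by fact
    show "prob_space.indep_vars ?M (\<lambda>_. borel) (\<lambda>a f. g a (f a)) J"
      by (rule prob_space.indep_vars_compose2[OF measure_pmf.prob_space_axioms
            prob_space.indep_vars_subset[OF measure_pmf.prob_space_axioms indep_vars_Pi_pmf[OF fin] JI]])
         auto
    show "AE x in ?M. g i (x i) \<in> {- 1..1}" if "i \<in> J" for i
      using bnd[OF that] by (auto simp: abs_le_iff)
  qed simp
  have mu: "?mu = (\<Sum>a\<in>J. measure_pmf.expectation (D a) (g a))"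
  proof (rule sum.cong[OF refl])
    fix a assume a: "a \<in> J"
    have "measure_pmf.expectation (Pi_pmf I dflt D) (\<lambda>f. g a (f a))
       = measure_pmf.expectation (map_pmf (\<lambda>f. f a) (Pi_pmf I dflt D)) (g a)"
      by simp
    also have "map_pmf (\<lambda>f. f a) (Pi_pmf I dflt D) = D a"
      using Pi_pmf_component[OF fin, of a dflt D] a JI by auto
    finally show "measure_pmf.expectation (Pi_pmf I dflt D) (\<lambda>f. g a (f a)) = measure_pmf.expectation (D a) (g a)" .
  qed
  have s: "(\<Sum>i\<in>J. ((1::real) - - 1)\<^sup>2) = 4 * real (card J)" by simp
  have cJ: "card J > 0" using False finJ by (simp add: card_gt_0_iff)
  have "measure_pmf.prob (Pi_pmf I dflt D) {x \<in> space ?M. \<bar>(\<Sum>a\<in>J. g a (x a)) - ?mu\<bar> \<ge> \<epsilon>}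
      \<le> 2 * exp (-2 * \<epsilon>\<^sup>2 / (\<Sum>i\<in>J. ((1::real) - - 1)\<^sup>2))"
    using eps cJ by (intro H.Hoeffding_ineq_abs_ge) auto
  also have "-2 * \<epsilon>\<^sup>2 / (\<Sum>i\<in>J. ((1::real) - - 1)\<^sup>2) = - \<epsilon>\<^sup>2 / (2 * real (card J))"
    by (simp only: s)
  also have "\<dots> \<le> - \<epsilon>\<^sup>2 / (2 * K)"
    using K cJ eps by (intro divide_left_mono_neg frac_le) (auto simp: mult_pos_pos)
  finally show ?thesis by (simp add: mu)
qed



definition sg :: "bool \<Rightarrow> real" where "sg b = 1 - 2 * of_bool b"

lemma sg_xor: "sg (a \<noteq> b) = sg a * sg b" by (cases a; cases b) (simp_all add: sg_def)
lemma abs_sg[simp]: "\<bar>sg a\<bar> = 1" by (cases a) (simp_all add: sg_def)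
lemma sg_sq[simp]: "sg a * sg a = 1" by (cases a) (simp_all add: sg_def)

lemma chain_sum_eq: "chain_sum k (chain x p \<xi>) = (\<Sum>t=1..k. sg (x (p t)) * sg (\<xi> t))"
  unfolding chain_sum_def
proof (rule sum.cong[OF refl])
  fix t assume "t \<in> {1..k}"
  then obtain t' where t: "t = Suc t'" by (cases t) auto
  show "1 - 2 * of_bool (chain x p \<xi> t \<noteq> chain x p \<xi> (t - 1)) = sg (x (p t)) * sg (\<xi> t)"
    unfolding t by (cases "chain x p \<xi> t'"; cases "x (p (Suc t'))"; cases "\<xi> (Suc t')") (simp_all add: sg_def)
qed

lemma pair_cond:
  assumes "\<And>a. measure_pmf.prob B {b. (a, b) \<in> E} \<le> c"
  shows "measure_pmf.prob (pair_pmf A B) E \<le> c"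
proof -
  have c: "c \<ge> 0" using assms[of undefined] measure_nonneg order_trans by blast
  have "emeasure (measure_pmf (pair_pmf A B)) E = (\<integral>\<^sup>+x. indicator E x \<partial>pair_pmf A B)"
    by simp
  also have "\<dots> = (\<integral>\<^sup>+a. \<integral>\<^sup>+b. indicator E (a, b) \<partial>B \<partial>A)"
    by (rule nn_integral_pair_pmf')
  also have "\<dots> = (\<integral>\<^sup>+a. emeasure (measure_pmf B) {b. (a, b) \<in> E} \<partial>A)"
    by (intro nn_integral_cong) (simp add: indicator_def flip: nn_integral_indicator)
  also have "\<dots> \<le> (\<integral>\<^sup>+a. ennreal c \<partial>A)"
    by (intro nn_integral_mono) (simp add: measure_pmf.emeasure_eq_measure assms ennreal_leI)
  also have "\<dots> = ennreal c" by simp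
  finally show ?thesis
    by (simp add: measure_pmf.emeasure_eq_measure c)
qed

lemma pair_fst: "measure_pmf.prob (pair_pmf A B) {(a, b). Q a} = measure_pmf.prob A {a. Q a}"
proof -
  have "measure_pmf.prob A {a. Q a} = measure_pmf.prob (map_pmf fst (pair_pmf A B)) {a. Q a}"
    by (simp add: map_fst_pair_pmf)
  also have "\<dots> = measure_pmf.prob (pair_pmf A B) {(a, b). Q a}"
    by (simp add: vimage_def case_prod_unfold)
  finally show ?thesis by simp
qed



definition Fj where "Fj m k P j X N = (\<Sum>i=1..m. sg (X i j) * chain_sum k (chain (X i) (P X i) (N i)))"
definition Gj where "Gj m k P j X = (\<Sum>i=1..m. \<Sum>t=1..k. sg (X i j) * sg (X i (P X i t)))"

lemma Fj_eq: "Fj m k P j X N = (\<Sum>a\<in>{1..m}\<times>{1..k}.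
     sg (X (fst a) j) * sg (X (fst a) (P X (fst a) (snd a))) * sg (N (fst a) (snd a)))"
  unfolding Fj_def chain_sum_eq sum_distrib_left sum.cartesian_product
  by (simp add: case_prod_unfold mult.assoc)

lemma Gj_eq: "Gj m k P j X = (\<Sum>a\<in>{1..m}\<times>{1..k}.
     sg (X (fst a) j) * sg (X (fst a) (P X (fst a) (snd a))))"
  unfolding Gj_def sum.cartesian_product by (simp add: case_prod_unfold)

lemma noise_bound:
  assumes "0 \<le> \<eta>" "\<eta> < 1/2" "m > 0" "k > 0"
  shows "measure_pmf.prob (noise_pmf m k \<eta>)
     {N. \<bar>Fj m k P j X N - (1 - 2*\<eta>) * Gj m k P j X\<bar> \<ge> real m * (1 - 2*\<eta>) / 4}
     \<le> 2 * exp (- (real m * (1 - 2*\<eta>) / 4)\<^sup>2 / (2 * (real m * real k)))"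
proof -
  let ?J = "{1..m}\<times>{1..k}"
  define c where "c a = sg (X (fst a) j) * sg (X (fst a) (P X (fst a) (snd a)))" for a
  define g where "g a b = c a * sg b" for a b
  have e: "measure_pmf.expectation (bernoulli_pmf \<eta>) (g a) = (1 - 2*\<eta>) * c a" for a
    using assms by (simp add: g_def sg_def algebra_simps)
  have cur: "Fj m k P j X (\<lambda>i t. f (i, t)) = (\<Sum>a\<in>?J. g a (f a))" for f
    unfolding Fj_eq g_def c_def by simp
  have G: "(1 - 2*\<eta>) * Gj m k P j X = (\<Sum>a\<in>?J. measure_pmf.expectation (bernoulli_pmf \<eta>) (g a))"
    unfolding Gj_eq e c_def by (simp add: sum_distrib_left)
  have "measure_pmf.prob (noise_pmf m k \<eta>)
     {N. \<bar>Fj m k P j X N - (1 - 2*\<eta>) * Gj m k P j X\<bar> \<ge> real m * (1 - 2*\<eta>) / 4}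
   = measure_pmf.prob (Pi_pmf ?J False (\<lambda>_. bernoulli_pmf \<eta>))
     {f. \<bar>(\<Sum>a\<in>?J. g a (f a)) - (\<Sum>a\<in>?J. measure_pmf.expectation (bernoulli_pmf \<eta>) (g a))\<bar> \<ge> real m * (1 - 2*\<eta>) / 4}"
    unfolding noise_pmf_def measure_map_pmf vimage_def by (simp only: cur G mem_Collect_eq)
  also have "\<dots> \<le> 2 * exp (- (real m * (1 - 2*\<eta>) / 4)\<^sup>2 / (2 * (real m * real k)))"
    by (rule hoeff_Pi) (use assms in \<open>auto simp: g_def c_def abs_mult\<close>)
  finally show ?thesis .
qed



definition Hj where "Hj m S j X = (\<Sum>i=1..m. \<Sum>l\<in>S-{j}. sg (X i j) * sg (X i l))"

lemma G_H:
  assumes "\<And>i. i \<in> {1..m} \<Longrightarrow> bij_betw (P X i) {1..k} S" "finite S"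
  shows "Gj m k P j X = real m * of_bool (j \<in> S) + Hj m S j X"
proof -
  have "(\<Sum>t=1..k. sg (X i j) * sg (X i (P X i t))) = of_bool (j \<in> S) + (\<Sum>l\<in>S-{j}. sg (X i j) * sg (X i l))"
    if i: "i \<in> {1..m}" for i
  proof -
    have "(\<Sum>t=1..k. sg (X i j) * sg (X i (P X i t))) = (\<Sum>l\<in>S. sg (X i j) * sg (X i l))"
      using sum.reindex_bij_betw[OF assms(1)[OF i], of "\<lambda>l. sg (X i j) * sg (X i l)"] by simp
    also have "\<dots> = of_bool (j \<in> S) + (\<Sum>l\<in>S-{j}. sg (X i j) * sg (X i l))"
    proof (cases "j \<in> S")
      case True
      then show ?thesis using sum.remove[OF assms(2) True, of "\<lambda>l. sg (X i j) * sg (X i l)"] by simp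
    next
      case False
      then show ?thesis by simp
    qed
    finally show ?thesis .
  qed
  then show ?thesis unfolding Gj_def Hj_def by (simp add: sum.distrib)
qed

definition flipX where "flipX S j X = (\<lambda>i l. if l \<in> S - {j} then X i l \<noteq> X i j else X i l)"

lemma flip_preserves:
  assumes "S \<subseteq> {1..d}"
  shows "map_pmf (flipX S j) (input_pmf m d) = input_pmf m d"
proof -
  let ?A = "{1..m} \<times> {1..d}"
  let ?E = "PiE_dflt ?A False (\<lambda>_. UNIV :: bool set)"
  define cur :: "(nat \<times> nat \<Rightarrow> bool) \<Rightarrow> nat \<Rightarrow> nat \<Rightarrow> bool" where "cur f = (\<lambda>i j. f (i, j))" for f
  define psi :: "(nat \<times> nat \<Rightarrow> bool) \<Rightarrow> nat \<times> nat \<Rightarrow> bool"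
    where "psi f = (\<lambda>(i, l). if l \<in> S - {j} then f (i, l) \<noteq> f (i, j) else f (i, l))" for f
  have inp: "input_pmf m d = map_pmf cur (pmf_of_set ?E)"
    unfolding input_pmf_def cur_def by (subst Pi_pmf_of_set) auto
  have pp: "psi (psi f) = f" for f
    unfolding psi_def by (auto simp: fun_eq_iff)
  have sub: "psi f \<in> ?E" if "f \<in> ?E" for f
    using that assms unfolding psi_def PiE_dflt_def by auto
  have img: "psi ` ?E = ?E"
  proof
    show "psi ` ?E \<subseteq> ?E" using sub by auto
    show "?E \<subseteq> psi ` ?E"
    proof
      fix f assume "f \<in> ?E"
      then have "psi f \<in> ?E" by (rule sub)
      then show "f \<in> psi ` ?E" using pp[of f] by (metis image_eqI)
    qed
  qed
  have inj: "inj_on psi ?E" by (metis inj_on_inverseI pp)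
  have ne: "?E \<noteq> {}" by (simp add: PiE_dflt_empty_iff)
  have fin: "finite ?E" by (intro finite_PiE_dflt) auto
  have comm: "flipX S j \<circ> cur = cur \<circ> psi"
    unfolding flipX_def cur_def psi_def by (auto simp: fun_eq_iff)
  have "map_pmf (flipX S j) (input_pmf m d) = map_pmf (flipX S j \<circ> cur) (pmf_of_set ?E)"
    unfolding inp by (simp add: pmf.map_comp)
  also have "\<dots> = map_pmf cur (map_pmf psi (pmf_of_set ?E))"
    unfolding comm by (simp add: pmf.map_comp)
  also have "map_pmf psi (pmf_of_set ?E) = pmf_of_set ?E"
    using map_pmf_of_set_inj[OF inj ne fin] img by simp
  finally show ?thesis unfolding inp .
qed

lemma X_bound:
  assumes "m > 0" "k > 0" "S \<subseteq> {1..d}" "card S \<le> k"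
  shows "measure_pmf.prob (input_pmf m d) {X. \<bar>Hj m S j X\<bar> \<ge> real m / 4}
     \<le> 2 * exp (- (real m / 4)\<^sup>2 / (2 * (real m * real k)))"
proof -
  have finS: "finite S" using assms(3) finite_subset by blast
  let ?J = "{1..m} \<times> (S - {j})"
  define H' where "H' X = (\<Sum>i=1..m. \<Sum>l\<in>S-{j}. sg (X i l))" for X :: "nat \<Rightarrow> nat \<Rightarrow> bool"
  have HH: "Hj m S j X = H' (flipX S j X)" for X
    unfolding Hj_def H'_def flipX_def by (intro sum.cong refl) (auto simp: sg_xor[symmetric] intro: arg_cong[where f=sg])
  have "measure_pmf.prob (input_pmf m d) {X. \<bar>Hj m S j X\<bar> \<ge> real m / 4}
      = measure_pmf.prob (map_pmf (flipX S j) (input_pmf m d)) {X. \<bar>H' X\<bar> \<ge> real m / 4}"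
    by (simp add: HH vimage_def)
  also have "\<dots> = measure_pmf.prob (input_pmf m d) {X. \<bar>H' X\<bar> \<ge> real m / 4}"
    by (simp only: flip_preserves[OF assms(3)])
  also have "\<dots> = measure_pmf.prob (Pi_pmf ({1..m} \<times> {1..d}) False (\<lambda>_. pmf_of_set UNIV))
     {f. \<bar>(\<Sum>a\<in>?J. sg (f a)) - (\<Sum>a\<in>?J. measure_pmf.expectation (pmf_of_set UNIV) sg)\<bar> \<ge> real m / 4}"
  proof -
    have e: "measure_pmf.expectation (pmf_of_set (UNIV::bool set)) sg = 0"
      by (simp add: integral_pmf_of_set UNIV_bool sg_def)
    show ?thesis
      unfolding input_pmf_def measure_map_pmf vimage_def H'_def e
      by (simp add: sum.cartesian_product case_prod_unfold)
  qed
  also have "\<dots> \<le> 2 * exp (- (real m / 4)\<^sup>2 / (2 * (real m * real k)))"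
  proof (rule hoeff_Pi)
    show "?J \<subseteq> {1..m} \<times> {1..d}" using assms by auto
    have "card ?J = m * card (S - {j})" by (simp add: card_cartesian_product)
    also have "\<dots> \<le> m * k" using assms card_Diff1_le[of S j] by (intro mult_le_mono2) linarith
    finally show "real (card ?J) \<le> real m * real k" by (metis of_nat_le_iff of_nat_mult)
  qed (use assms in auto)
  finally show ?thesis .
qed



lemma topk_unique:
  assumes "S \<subseteq> {1..d}" "card S = k"
    and sep: "\<And>l j. l \<in> S \<Longrightarrow> j \<in> {1..d} - S \<Longrightarrow> sc j < sc l"
    and T: "T \<in> top_k_sets d k sc"
  shows "T = S"
proof (rule ccontr)
  assume ne: "T \<noteq> S"
  have finS: "finite S" using assms(1) finite_subset by blast
  have Td: "T \<subseteq> {1..d}" and cT: "card T = k" and cond: "\<forall>j\<in>T. \<forall>l\<in>{1..d} - T. sc l \<le> sc j"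
    using T unfolding top_k_sets_def by auto
  have finT: "finite T" using Td finite_subset by blast
  have "\<not> S \<subseteq> T" using card_subset_eq[OF finT] cT assms(2) ne by metis
  then obtain l where l: "l \<in> S" "l \<notin> T" by blast
  have "\<not> T \<subseteq> S" using card_subset_eq[OF finS] cT assms(2) ne by metis
  then obtain j where j: "j \<in> T" "j \<notin> S" by blast
  have "sc l \<le> sc j" using cond j l assms(1) by auto
  moreover have "sc j < sc l" using sep l j Td by auto
  ultimately show False by simp
qed

lemma final_arith:
  fixes d k m \<delta> \<gamma> :: real
  assumes "d \<ge> 2" "k > 0" "0 < \<delta>" "\<delta> < 1" "0 < \<gamma>" "m \<ge> 96 * (k / \<gamma>\<^sup>2) * ln (d / \<delta>)" "m > 0"
  shows "d * (2 * exp (- (m * \<gamma> / 4)\<^sup>2 / (2 * (m * k))) + 2 * exp (- (m * \<gamma> / 4)\<^sup>2 / (2 * (m * k)))) \<le> \<delta>"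
proof -
  define L where "L = ln (d / \<delta>)"
  have dd: "d / \<delta> > 0" using assms by simp
  have eq: "(m * \<gamma> / 4)\<^sup>2 / (2 * (m * k)) = m * \<gamma>\<^sup>2 / (32 * k)"
    using assms by (simp add: field_simps power2_eq_square)
  have "m * \<gamma>\<^sup>2 / (32 * k) \<ge> 3 * L"
  proof -
    have "m * \<gamma>\<^sup>2 \<ge> 96 * k * L"
      using assms(6) assms(5) unfolding L_def by (simp add: field_simps)
    then show ?thesis using assms(2) by (simp add: field_simps)
  qed
  then have "exp (- (m * \<gamma> / 4)\<^sup>2 / (2 * (m * k))) \<le> exp (- (3 * L))"
    using eq by simp
  also have "exp (- (3 * L)) = exp (- L) ^ 3"
    using exp_of_nat_mult[of 3 "-L"] by simp
  also have "exp (- L) = \<delta> / d"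
    unfolding L_def exp_minus using dd by simp
  finally have e: "exp (- (m * \<gamma> / 4)\<^sup>2 / (2 * (m * k))) \<le> (\<delta> / d) ^ 3" .
  have "d * (2 * exp (- (m * \<gamma> / 4)\<^sup>2 / (2 * (m * k))) + 2 * exp (- (m * \<gamma> / 4)\<^sup>2 / (2 * (m * k))))
      \<le> d * (4 * (\<delta> / d) ^ 3)" using e assms by simp
  also have "\<dots> = \<delta> * (4 * \<delta>\<^sup>2 / d\<^sup>2)" using assms by (simp add: field_simps power2_eq_square power3_eq_cube)
  also have "\<dots> \<le> \<delta> * 1"
  proof (intro mult_left_mono)
    have "4 * \<delta>\<^sup>2 \<le> 4 * 1" using assms by (simp add: power_le_one)
    also have "\<dots> \<le> d\<^sup>2" using assms power_mono[of 2 d 2] by simp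
    finally show "4 * \<delta>\<^sup>2 / d\<^sup>2 \<le> 1" using assms by simp
  qed (use assms in simp)
  finally show ?thesis by simp
qed



theorem theorem11p1:
  "\<exists>C::real. C > 0 \<and>
    (\<forall>(d::nat) (k::nat) (S::nat set) (\<eta>::real) (m::nat) (\<delta>::real)
       (P :: (nat \<Rightarrow> nat \<Rightarrow> bool) \<Rightarrow> nat \<Rightarrow> nat \<Rightarrow> nat).
       k \<le> d \<longrightarrow> S \<subseteq> {1..d} \<longrightarrow> card S = k \<longrightarrow>
       0 \<le> \<eta> \<longrightarrow> \<eta> < 1/2 \<longrightarrow>
       (\<forall>X i. i \<in> {1..m} \<longrightarrow> bij_betw (P X i) {1..k} S) \<longrightarrow>
       0 < \<delta> \<longrightarrow> \<delta> < 1 \<longrightarrow>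
       real m \<ge> C * (real k / (1 - 2 * \<eta>)^2) * ln (real d / \<delta>) \<longrightarrow>
       measure_pmf.prob (pair_pmf (input_pmf m d) (noise_pmf m k \<eta>))
         {(X, N). recovery_success d k m S P X N} \<ge> 1 - \<delta>)"
proof (rule exI[of _ 96], intro conjI allI impI)
  show "(0::real) < 96" by simp
  fix d k :: nat and S :: "nat set" and \<eta> :: real and m :: nat and \<delta> :: real
    and P :: "(nat \<Rightarrow> nat \<Rightarrow> bool) \<Rightarrow> nat \<Rightarrow> nat \<Rightarrow> nat"
  assume kd: "k \<le> d" and Sd: "S \<subseteq> {1..d}" and cS: "card S = k" and e0: "0 \<le> \<eta>" and e1: "\<eta> < 1/2"
    and bij: "\<forall>X i. i \<in> {1..m} \<longrightarrow> bij_betw (P X i) {1..k} S"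
    and d0: "0 < \<delta>" and d1: "\<delta> < 1"
    and mC: "real m \<ge> 96 * (real k / (1 - 2 * \<eta>)^2) * ln (real d / \<delta>)"
  let ?M = "pair_pmf (input_pmf m d) (noise_pmf m k \<eta>)"
  let ?G = "{(X, N). recovery_success d k m S P X N}"
  have finS: "finite S" using Sd finite_subset by blast
  show "measure_pmf.prob ?M ?G \<ge> 1 - \<delta>"
  proof (cases "k = 0 \<or> k = d")
    case True
    have "T = S" if "T \<in> top_k_sets d k sc" for T sc
    proof -
      have Td: "T \<subseteq> {1..d}" "card T = k" using that unfolding top_k_sets_def by auto
      have finT: "finite T" using Td finite_subset by blast
      show ?thesis
      proof (cases "k = 0")
        case True
        then show ?thesis using Td finT cS finS by simp
      next
        case False
        then have "k = d" using \<open>k = 0 \<or> k = d\<close> by simp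
        then have "T = {1..d}" "S = {1..d}" using Td Sd cS by (simp_all add: card_subset_eq)
        then show ?thesis by simp
      qed
    qed
    then have "?G = UNIV" unfolding recovery_success_def by auto
    then show ?thesis using d0 by simp
  next
    case False
    then have k0: "k > 0" and kd': "k < d" using kd by auto
    define \<gamma> where "\<gamma> = 1 - 2 * \<eta>"
    have g0: "\<gamma> > 0" and g1: "\<gamma> \<le> 1" using e0 e1 by (auto simp: \<gamma>_def)
    have d2: "real d \<ge> 2" using k0 kd' by linarith
    have L0: "ln (real d / \<delta>) > 0" using d2 d0 d1 by (simp add: ln_gt_zero_iff field_simps)
    have "real m > 0"
    proof -
      have "0 < 96 * (real k / (1 - 2 * \<eta>)^2) * ln (real d / \<delta>)"
        using k0 L0 g0 by (simp add: \<gamma>_def[symmetric])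
      then show ?thesis using mC by linarith
    qed
    then have m0: "m > 0" by simp
    define B where "B = 2 * exp (- (real m * \<gamma> / 4)\<^sup>2 / (2 * (real m * real k)))"
    define BX where "BX j = {(X, N::nat \<Rightarrow> nat \<Rightarrow> bool). \<bar>Hj m S j X\<bar> \<ge> real m / 4}" for j :: nat
    define BN where "BN j = {(X, N). \<bar>Fj m k P j X N - \<gamma> * Gj m k P j X\<bar> \<ge> real m * \<gamma> / 4}" for j :: nat
    have pBX: "measure_pmf.prob ?M (BX j) \<le> B" for j
    proof -
      have "measure_pmf.prob ?M (BX j) = measure_pmf.prob (input_pmf m d) {X. \<bar>Hj m S j X\<bar> \<ge> real m / 4}"
        unfolding BX_def by (rule pair_fst)
      also have "\<dots> \<le> 2 * exp (- (real m / 4)\<^sup>2 / (2 * (real m * real k)))"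
        by (rule X_bound) (use m0 k0 Sd cS in auto)
      also have "\<dots> \<le> B"
      proof -
        have "(real m * \<gamma> / 4)\<^sup>2 \<le> (real m / 4)\<^sup>2"
          using m0 g0 g1 by (intro power_mono) (auto simp: mult_left_le)
        then have "(real m * \<gamma> / 4)\<^sup>2 / (2 * (real m * real k)) \<le> (real m / 4)\<^sup>2 / (2 * (real m * real k))"
          using m0 k0 by (intro divide_right_mono) auto
        then show ?thesis unfolding B_def by simp
      qed
      finally show ?thesis .
    qed
    have pBN: "measure_pmf.prob ?M (BN j) \<le> B" for j
      unfolding B_def BN_def \<gamma>_def
      by (rule pair_cond) (use noise_bound[OF e0 e1 m0 k0, of P j] in simp)
    have sub: "UNIV - (\<Union>j\<in>{1..d}. BX j \<union> BN j) \<subseteq> ?G"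
    proof
      fix z assume z: "z \<in> UNIV - (\<Union>j\<in>{1..d}. BX j \<union> BN j)"
      obtain X N where zXN: "z = (X, N)" by (cases z)
      have H: "\<bar>Hj m S j X\<bar> < real m / 4" and F: "\<bar>Fj m k P j X N - \<gamma> * Gj m k P j X\<bar> < real m * \<gamma> / 4"
        if "j \<in> {1..d}" for j
      proof -
        have "z \<notin> BX j" "z \<notin> BN j" using z that by blast+
        then show "\<bar>Hj m S j X\<bar> < real m / 4" "\<bar>Fj m k P j X N - \<gamma> * Gj m k P j X\<bar> < real m * \<gamma> / 4"
          unfolding zXN BX_def BN_def by simp_all
      qed
      have GH: "Gj m k P j X = real m * of_bool (j \<in> S) + Hj m S j X" for j
        using bij finS by (intro G_H) auto
      define sc where "sc = score m k X (\<lambda>i. chain (X i) (P X i) (N i))"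
      have sc: "sc j = Fj m k P j X N / real m" for j
        unfolding sc_def score_def Fj_def sg_def by simp
      have sep: "sc j < sc l" if l: "l \<in> S" and j: "j \<in> {1..d} - S" for l j
      proof -
        have ld: "l \<in> {1..d}" using l Sd by auto
        have "Fj m k P l X N > real m * \<gamma> / 2"
        proof -
          have "\<gamma> * Gj m k P l X = \<gamma> * real m + \<gamma> * Hj m S l X" using GH[of l] l by (simp add: algebra_simps)
          moreover have "\<gamma> * Hj m S l X \<ge> - (\<gamma> * (real m / 4))"
          proof -
            have "- (real m / 4) \<le> Hj m S l X" using H[OF ld] unfolding abs_less_iff by linarith
            from mult_left_mono[OF this, of \<gamma>] g0 show ?thesis by simp
          qed
          moreover have "- (real m * \<gamma> / 4) < Fj m k P l X N - \<gamma> * Gj m k P l X"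
            using F[OF ld] unfolding abs_less_iff by linarith
          moreover have "\<gamma> * (real m / 4) = (\<gamma> * real m) / 4" "real m * \<gamma> / 4 = (\<gamma> * real m) / 4"
            "real m * \<gamma> / 2 = (\<gamma> * real m) / 2" "\<gamma> * real m = \<gamma> * real m" by simp_all
          ultimately show ?thesis by linarith
        qed
        moreover have "Fj m k P j X N < real m * \<gamma> / 2"
        proof -
          have jd: "j \<in> {1..d}" "j \<notin> S" using j by auto
          have "\<gamma> * Gj m k P j X = \<gamma> * Hj m S j X" using GH[of j] jd by simp
          moreover have "\<gamma> * Hj m S j X \<le> \<gamma> * (real m / 4)"
          proof -
            have "Hj m S j X \<le> real m / 4" using H[OF jd(1)] unfolding abs_less_iff by linarith
            from mult_left_mono[OF this, of \<gamma>] g0 show ?thesis by simp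
          qed
          moreover have "Fj m k P j X N - \<gamma> * Gj m k P j X < real m * \<gamma> / 4"
            using F[OF jd(1)] unfolding abs_less_iff by linarith
          moreover have "\<gamma> * (real m / 4) = (\<gamma> * real m) / 4" "real m * \<gamma> / 4 = (\<gamma> * real m) / 4"
            "real m * \<gamma> / 2 = (\<gamma> * real m) / 2" "\<gamma> * real m = \<gamma> * real m" by simp_all
          ultimately show ?thesis by linarith
        qed
        ultimately show ?thesis unfolding sc using m0 by (simp add: divide_strict_right_mono)
      qed
      have "recovery_success d k m S P X N"
        unfolding recovery_success_def sc_def[symmetric]
        using topk_unique[where sc=sc, OF Sd cS sep] by blast
      then show "z \<in> ?G" using zXN by simp
    qed
    have "measure_pmf.prob ?M (\<Union>j\<in>{1..d}. BX j \<union> BN j) \<le> (\<Sum>j\<in>{1..d}. measure_pmf.prob ?M (BX j \<union> BN j))"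
      by (rule measure_pmf.finite_measure_subadditive_finite) auto
    also have "\<dots> \<le> (\<Sum>j\<in>{1..d}. B + B)"
      by (intro sum_mono order_trans[OF measure_Un_le] add_mono pBX pBN) auto
    also have "\<dots> = real d * (B + B)" by simp
    also have "\<dots> \<le> \<delta>"
    proof -
      have mC': "real m \<ge> 96 * (real k / \<gamma>\<^sup>2) * ln (real d / \<delta>)"
        using mC unfolding \<gamma>_def .
      have "real k > 0" "real m > 0" using k0 m0 by auto
      from final_arith[OF d2 this(1) d0 d1 g0 mC' this(2)] show ?thesis unfolding B_def .
    qed
    finally have bad: "measure_pmf.prob ?M (\<Union>j\<in>{1..d}. BX j \<union> BN j) \<le> \<delta>" .
    have "measure_pmf.prob ?M (UNIV - (\<Union>j\<in>{1..d}. BX j \<union> BN j)) = 1 - measure_pmf.prob ?M (\<Union>j\<in>{1..d}. BX j \<union> BN j)"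
      using measure_pmf.prob_compl[of "\<Union>j\<in>{1..d}. BX j \<union> BN j" ?M] by simp
    moreover have "measure_pmf.prob ?M (UNIV - (\<Union>j\<in>{1..d}. BX j \<union> BN j)) \<le> measure_pmf.prob ?M ?G"
      by (rule measure_pmf.finite_measure_mono[OF sub]) simp
    ultimately show ?thesis using bad by linarith
  qed
qed

end
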